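(* Fix a binary subcarrier assignment and consider the optimization problem over $\{\tilde\gamma_k\}_{k=1}^K$, $\{\tilde M_{k,s}\}_{k\le K,s\le S}$, $\{T_k^{\rm com,ul}\}$, $\{T_k^{\rm com,dl}\}$: $$\min\ \frac I\eta\sum_{k=1}^K\frac{|\mathcal D_k|}{|\mathcal D|}(1-\tilde\gamma_k)+\frac{V\eta}{\sqrt{|\mathcal D|}}\sqrt{\sum_{k=1}^K\frac1{-\tilde\gamma_k^2+a_k}}$$ subject to, for all $k$ (and all $(k,s)$ where indicated): $T_k^{\rm com,dl}+\frac{C_k|\mathcal D_k|}{f_k}+T_k^{\rm com,ul}\le T_0$; $\sum_{s=1}^S\frac{\tilde M_{k,s}(2^{R^{\rm ul}_{k,s}/B}-1)\sigma^2Q}{|h^{\rm ul}_{k,s}|^2R^{\rm ul}_{k,s}}+C_k|\mathcal D_k|\Omega_kf_k^2+\xi_k\le E_{k,0}$; $\sum_{s=1}^S\tilde M_{k,s}\ge\tilde\gamma_kM$; $0\le\tilde\gamma_k<1$; $T_k^{\rm com,dl}\ge\tilde M_{k,s}Q/R^{\rm dl}_{k,s}$ for all $(k,s)$; $T_k^{\rm com,ul}\ge\tilde M_{k,s}Q/R^{\rm ul}_{k,s}$ for all $(k,s)$. This problem is convex (over the domain where the objective is defined, i.e. $\tilde\gamma_k^2<a_k$ for all $k$).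
   Context: All of the following are fixed positive constants: $I=U'(n_1+n_2)\mathcal H^2\mathcal G^4$, $\eta$, $V=\sqrt{6C/(\delta\lambda)}$, $|\mathcal D_k|$ and $|\mathcal D|=\sum_k|\mathcal D_k|$, $a_k=\frac{2\lambda+\Lambda_{k,\min}}{2\lambda}$ (with $\lambda>0$, $a_k>0$), $C_k$ (processor operations per sample), $f_k$ (processor frequency), $T_0$ (latency budget), $B$ (subcarrier bandwidth), $\sigma^2$ (noise power), $Q$ (bits per parameter), channel gains $h^{\rm ul}_{k,s}$, uplink and downlink rates $R^{\rm ul}_{k,s},R^{\rm dl}_{k,s}$, $\Omega_k$, $\xi_k$, energy budgets $E_{k,0}$, and $M=(n_1+n_2)r$. Here $\tilde\gamma_k=1-\gamma_k$ where $\gamma_k$ is device $k$'s dropout rate, and $\tilde M_{k,s}$ is the number of parameters device $k$ transmits on subcarrier $s$. *)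

theory Defs
  imports "HOL-Analysis.Analysis"
begin

text \<open>Devices are indexed by a finite type 'k (K = CARD('k)), subcarriers by a
finite type 's (S = CARD('s)). A decision variable is a tuple
(gamma_tilde, M_tilde, T_com_ul, T_com_dl) in real^'k * real^'s^'k * real^'k * real^'k.\<close>

definition a_coef :: "real \<Rightarrow> real \<Rightarrow> real" where
  "a_coef lam Lmin = (2 * lam + Lmin) / (2 * lam)"

definition objective ::
  "real \<Rightarrow> real \<Rightarrow> real \<Rightarrow> real^'k \<Rightarrow> real^'k \<Rightarrow> real^'k \<Rightarrow> real" where
  "objective I eta V Dk a g =
     I / eta * (\<Sum>k\<in>UNIV. Dk$k / (\<Sum>j\<in>UNIV. Dk$j) * (1 - g$k))
   + V * eta / sqrt (\<Sum>j\<in>UNIV. Dk$j) * sqrt (\<Sum>k\<in>UNIV. 1 / (- ((g$k)^2) + a$k))"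

definition feasible_set ::
  "real^'k \<Rightarrow> real^'k \<Rightarrow> real^'k \<Rightarrow> real \<Rightarrow> real \<Rightarrow> real \<Rightarrow> real \<Rightarrow>
   real^'s^'k \<Rightarrow> real^'s^'k \<Rightarrow> real^'s^'k \<Rightarrow> real^'k \<Rightarrow> real^'k \<Rightarrow> real^'k \<Rightarrow> real \<Rightarrow>
   ((real^'k) \<times> (real^'s^'k) \<times> (real^'k) \<times> (real^'k)) set" where
  "feasible_set Ck Dk f T0 B sigma2 Q h Rul Rdl Omega xi E0 M =
    {(g, Mt, Tul, Tdl).
      (\<forall>k. Tdl$k + Ck$k * Dk$k / f$k + Tul$k \<le> T0) \<and>
      (\<forall>k. (\<Sum>s\<in>UNIV. Mt$k$s * (2 powr (Rul$k$s / B) - 1) * sigma2 * Q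
                          / ((\<bar>h$k$s\<bar>)^2 * Rul$k$s))
             + Ck$k * Dk$k * Omega$k * (f$k)^2 + xi$k \<le> E0$k) \<and>
      (\<forall>k. (\<Sum>s\<in>UNIV. Mt$k$s) \<ge> g$k * M) \<and>
      (\<forall>k. 0 \<le> g$k \<and> g$k < 1) \<and>
      (\<forall>k s. Tdl$k \<ge> Mt$k$s * Q / Rdl$k$s) \<and>
      (\<forall>k s. Tul$k \<ge> Mt$k$s * Q / Rul$k$s)}"

definition objective_domain ::
  "real^'k \<Rightarrow> ((real^'k) \<times> (real^'s^'k) \<times> (real^'k) \<times> (real^'k)) set" where
  "objective_domain a = {(g, Mt, Tul, Tdl). \<forall>k. (g$k)^2 < a$k}"

end

theory Submission
  imports Defs
begin

lemma lin_le: fixes u v A B c :: real assumes "u\<ge>0" "v\<ge>0" "u+v=1" "A \<le> c" "B \<le> c"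
  shows "u * A + v * B \<le> c"
proof -
  have "u * A + v * B \<le> u * c + v * c" using assms by (intro add_mono mult_left_mono) auto
  thus ?thesis using assms(3) by (simp add: distrib_right[symmetric])
qed

lemma lin_lt: fixes u v A B c :: real assumes "u\<ge>0" "v\<ge>0" "u+v=1" "A < c" "B < c"
  shows "u * A + v * B < c"
proof (cases "u = 0")
  case True thus ?thesis using assms by simp
next
  case False
  hence "u * A < u * c" using assms by simp
  moreover have "v * B \<le> v * c" using assms by (intro mult_left_mono) auto
  ultimately have "u * A + v * B < u * c + v * c" by linarith
  thus ?thesis using assms(3) by (simp add: distrib_right[symmetric])
qed

lemma lin_gt: fixes u v A B c :: real assumes "u\<ge>0" "v\<ge>0" "u+v=1" "A > c" "B > c"
  shows "u * A + v * B > c"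
proof -
  have "u * (-A) + v * (-B) < -c" using lin_lt[OF assms(1-3), of "-A" "-c" "-B"] assms by simp
  thus ?thesis by simp
qed

lemma sq_conv: fixes u v x y :: real assumes "u\<ge>0" "v\<ge>0" "u+v=1"
  shows "(u * x + v * y)^2 \<le> u * x^2 + v * y^2"
proof -
  have "u * x^2 + v * y^2 - (u * x + v * y)^2 = (u + v) * (u * x^2 + v * y^2) - (u * x + v * y)^2" using assms by simp
  also have "\<dots> = u * v * (x - y)^2" by (simp add: power2_eq_square algebra_simps)
  finally have e: "u * x^2 + v * y^2 - (u * x + v * y)^2 = u * v * (x - y)^2" .
  have "u * v * (x - y)^2 \<ge> 0" using assms by simp
  thus ?thesis using e by linarith
qed

lemma inv_sqrt_conv: fixes u v p q :: real assumes "p>0" "q>0" "u\<ge>0" "v\<ge>0" "u+v=1"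
  shows "1/sqrt(u * p + v * q) \<le> u/sqrt p + v/sqrt q"
proof -
  define x where "x = sqrt p" define y where "y = sqrt q"
  have x: "x>0" "x^2 = p" using assms by (auto simp: x_def)
  have y: "y>0" "y^2 = q" using assms by (auto simp: y_def)
  have pos: "u * x + v * y > 0" using lin_gt[OF assms(3-5), of 0 x y] x y by simp
  have "(u * x + v * y)^2 \<le> u * p + v * q" using sq_conv[OF assms(3-5), of x y] x y by simp
  hence s: "u * x + v * y \<le> sqrt(u * p + v * q)" using pos by (simp add: real_le_rsqrt)
  have "1/sqrt(u * p + v * q) \<le> 1/(u * x + v * y)" using s pos by (simp add: frac_le)
  also have "\<dots> \<le> u/x + v/y"
  proof -
    have "(u * x + v * y) * (u/x + v/y) - 1 = (u * x + v * y) * (u/x + v/y) - (u + v)^2" using assms by simp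
    also have "\<dots> = u * v * (x - y)^2/(x * y)" using x y by (simp add: field_simps power2_eq_square)
    finally have e: "(u * x + v * y) * (u/x + v/y) - 1 = u * v * (x - y)^2/(x * y)" .
    have "u * v * (x - y)^2/(x * y) \<ge> 0" using x y assms by simp
    hence "(u * x + v * y) * (u/x + v/y) \<ge> 1" using e by linarith
    thus ?thesis using pos by (simp add: divide_le_eq mult.commute)
  qed
  finally show ?thesis by (simp add: x_def y_def)
qed

lemma phi_conv: fixes u v a g1 g2 :: real assumes "g1^2 < a" "g2^2 < a" "u\<ge>0" "v\<ge>0" "u+v=1"
  shows "1/sqrt(a - (u * g1 + v * g2)^2) \<le> u/sqrt(a - g1^2) + v/sqrt(a - g2^2)"
proof -
  have e: "u * (a - g1^2) + v * (a - g2^2) = (u + v) * a - (u * g1^2 + v * g2^2)" by (simp add: algebra_simps)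
  have p: "u * (a - g1^2) + v * (a - g2^2) > 0" using lin_gt[OF assms(3-5), of 0] assms by simp
  have "u * (a - g1^2) + v * (a - g2^2) \<le> a - (u * g1 + v * g2)^2" using e assms(5) sq_conv[OF assms(3-5), of g1 g2] by simp
  hence "1/sqrt(a - (u * g1 + v * g2)^2) \<le> 1/sqrt(u * (a - g1^2) + v * (a - g2^2))" using p
    by (simp add: frac_le)
  also have "\<dots> \<le> u/sqrt(a - g1^2) + v/sqrt(a - g2^2)" using inv_sqrt_conv assms p by simp
  finally show ?thesis .
qed
lemma sqrt_part:
  fixes a g1 g2 :: "real^'k" and u v :: real
  assumes "\<forall>k. (g1$k)^2 < a$k" "\<forall>k. (g2$k)^2 < a$k" "u\<ge>0" "v\<ge>0" "u+v=1"
  shows "sqrt (\<Sum>k\<in>UNIV. 1 / (- (((u *\<^sub>R g1 + v *\<^sub>R g2)$k)^2) + a$k))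
     \<le> u * sqrt (\<Sum>k\<in>UNIV. 1 / (- ((g1$k)^2) + a$k)) + v * sqrt (\<Sum>k\<in>UNIV. 1 / (- ((g2$k)^2) + a$k))"
proof -
  define \<Phi> :: "real^'k \<Rightarrow> real^'k" where "\<Phi> g = (\<chi> k. 1 / sqrt (a$k - (g$k)^2))" for g
  have nrm: "sqrt (\<Sum>k\<in>UNIV. 1 / (- ((g$k)^2) + a$k)) = norm (\<Phi> g)" if "\<forall>k. (g$k)^2 < a$k" for g
  proof -
    have "(\<Sum>k\<in>UNIV. 1 / (- ((g$k)^2) + a$k)) = (\<Sum>k\<in>UNIV. (norm (\<Phi> g $ k))^2)"
    proof (rule sum.cong)
      fix k assume "k \<in> (UNIV::'k set)"
      have p: "a$k - (g$k)^2 > 0" using that by auto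
      have "(norm (\<Phi> g $ k))^2 = (1 / sqrt (a$k - (g$k)^2))^2" using p by (simp add: \<Phi>_def)
      also have "\<dots> = 1 / (a$k - (g$k)^2)" using p by (simp add: power_divide)
      finally show "1 / (- ((g$k)^2) + a$k) = (norm (\<Phi> g $ k))^2" by simp
    qed simp
    thus ?thesis by (simp add: norm_vec_def L2_set_def)
  qed
  have m: "\<forall>k. ((u *\<^sub>R g1 + v *\<^sub>R g2)$k)^2 < a$k"
  proof
    fix k
    have "((u *\<^sub>R g1 + v *\<^sub>R g2)$k)^2 = (u * g1$k + v * g2$k)^2" by simp
    also have "\<dots> \<le> u * (g1$k)^2 + v * (g2$k)^2" using sq_conv assms by blast
    also have "\<dots> < a$k" using lin_lt assms by blast
    finally show "((u *\<^sub>R g1 + v *\<^sub>R g2)$k)^2 < a$k" .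
  qed
  have "norm (\<Phi> (u *\<^sub>R g1 + v *\<^sub>R g2)) \<le> norm (u *\<^sub>R \<Phi> g1 + v *\<^sub>R \<Phi> g2)"
  proof (rule norm_le_componentwise_cart)
    fix k
    have "1 / sqrt (a$k - (u * g1$k + v * g2$k)^2) \<le> u / sqrt (a$k - (g1$k)^2) + v / sqrt (a$k - (g2$k)^2)"
      using phi_conv assms by blast
    moreover have "a$k - (u * g1$k + v * g2$k)^2 > 0" using m[rule_format, of k] by simp
    moreover have "a$k - (g1$k)^2 > 0" "a$k - (g2$k)^2 > 0" using assms by auto
    ultimately show "norm (\<Phi> (u *\<^sub>R g1 + v *\<^sub>R g2) $ k) \<le> norm ((u *\<^sub>R \<Phi> g1 + v *\<^sub>R \<Phi> g2) $ k)"
      by (simp add: \<Phi>_def)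
  qed
  also have "\<dots> \<le> norm (u *\<^sub>R \<Phi> g1) + norm (v *\<^sub>R \<Phi> g2)" by (rule norm_triangle_ineq)
  also have "\<dots> = u * norm (\<Phi> g1) + v * norm (\<Phi> g2)" using assms by simp
  finally show ?thesis using nrm[OF m] nrm[OF assms(1)] nrm[OF assms(2)] by simp
qed

theorem lemma4:
  fixes I eta V lam T0 B sigma2 Q M :: real
    and Dk Lmin Ck f Omega xi E0 :: "real^'k"
    and h Rul Rdl :: "real^'s^'k"
  assumes "I > 0" and "eta > 0" and "V > 0" and "lam > 0"
    and "\<forall>k. Dk$k > 0"
    and "\<forall>k. a_coef lam (Lmin$k) > 0"
    and "\<forall>k. Ck$k > 0" and "\<forall>k. f$k > 0" and "T0 > 0" and "B > 0"
    and "sigma2 > 0" and "Q > 0"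
    and "\<forall>k s. h$k$s \<noteq> 0"
    and "\<forall>k s. Rul$k$s > 0" and "\<forall>k s. Rdl$k$s > 0"
    and "\<forall>k. Omega$k > 0" and "\<forall>k. xi$k > 0" and "\<forall>k. E0$k > 0" and "M > 0"
  defines "a \<equiv> (\<chi> k. a_coef lam (Lmin$k))"
  defines "Dom \<equiv> feasible_set Ck Dk f T0 B sigma2 Q h Rul Rdl Omega xi E0 M
                   \<inter> objective_domain a"
  shows "convex Dom \<and>
         convex_on Dom (\<lambda>(g, Mt, Tul, Tdl). objective I eta V Dk a g)"
proof -
  have cD: "convex Dom"
  proof (rule convexI)
    fix x y :: "(real^'k) \<times> (real^'s^'k) \<times> (real^'k) \<times> (real^'k)" and u v :: real
    assume x: "x \<in> Dom" and y: "y \<in> Dom" and u: "0 \<le> u" and v: "0 \<le> v" and uv: "u + v = 1"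
    obtain g1 M1 U1 T1 where x_eq: "x = (g1, M1, U1, T1)" by (cases x) auto
    obtain g2 M2 U2 T2 where y_eq: "y = (g2, M2, U2, T2)" by (cases y) auto
    note X = x[unfolded x_eq Dom_def feasible_set_def objective_domain_def Int_iff mem_Collect_eq prod.case]
    note Y = y[unfolded y_eq Dom_def feasible_set_def objective_domain_def Int_iff mem_Collect_eq prod.case]
    have vu: "v = 1 - u" using uv by simp
    note L = lin_le[OF u v uv] and LT = lin_lt[OF u v uv]
    have c1: "(u * T1$k + v * T2$k) + Ck$k * Dk$k / f$k + (u * U1$k + v * U2$k) \<le> T0" for k
    proof -
      have e0: "(u * T1$k + v * T2$k) + cc + (u * U1$k + v * U2$k)
          = u * (T1$k + cc + U1$k) + v * (T2$k + cc + U2$k)" for cc :: real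
        unfolding vu by (simp add: algebra_simps)
      note e = e0[of "Ck$k * Dk$k / f$k"]
      have "T1$k + Ck$k * Dk$k / f$k + U1$k \<le> T0" using X by blast
      moreover have "T2$k + Ck$k * Dk$k / f$k + U2$k \<le> T0" using Y by blast
      ultimately show ?thesis unfolding e by (rule L)
    qed
    have c2: "(\<Sum>s\<in>UNIV. (u * M1$k$s + v * M2$k$s) * (2 powr (Rul$k$s / B) - 1) * sigma2 * Q
                          / ((\<bar>h$k$s\<bar>)^2 * Rul$k$s))
             + Ck$k * Dk$k * Omega$k * (f$k)^2 + xi$k \<le> E0$k" for k
    proof -
      define e where "e s = (2 powr (Rul$k$s / B) - 1) * sigma2 * Q / ((\<bar>h$k$s\<bar>)^2 * Rul$k$s)" for s
      define K where "K = Ck$k * Dk$k * Omega$k * (f$k)^2 + xi$k"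
      have r: "Mx * (2 powr (Rul$k$s / B) - 1) * sigma2 * Q / ((\<bar>h$k$s\<bar>)^2 * Rul$k$s) = Mx * e s" for Mx s
        by (simp add: e_def)
      have "(\<Sum>s\<in>UNIV. M1$k$s * (2 powr (Rul$k$s / B) - 1) * sigma2 * Q
                          / ((\<bar>h$k$s\<bar>)^2 * Rul$k$s))
             + Ck$k * Dk$k * Omega$k * (f$k)^2 + xi$k \<le> E0$k" using X by blast
      hence E1: "(\<Sum>s\<in>UNIV. M1$k$s * e s) + K \<le> E0$k"
        unfolding r K_def by (simp only: add.assoc)
      have "(\<Sum>s\<in>UNIV. M2$k$s * (2 powr (Rul$k$s / B) - 1) * sigma2 * Q
                          / ((\<bar>h$k$s\<bar>)^2 * Rul$k$s))
             + Ck$k * Dk$k * Omega$k * (f$k)^2 + xi$k \<le> E0$k" using Y by blast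
      hence E2: "(\<Sum>s\<in>UNIV. M2$k$s * e s) + K \<le> E0$k"
        unfolding r K_def by (simp only: add.assoc)
      have sd: "(\<Sum>s\<in>UNIV. (u * M1$k$s + v * M2$k$s) * e s) = u * (\<Sum>s\<in>UNIV. M1$k$s * e s) + v * (\<Sum>s\<in>UNIV. M2$k$s * e s)"
        by (simp add: sum.distrib sum_distrib_left distrib_right mult.assoc)
      have "(\<Sum>s\<in>UNIV. (u * M1$k$s + v * M2$k$s) * e s) + K
          = u * ((\<Sum>s\<in>UNIV. M1$k$s * e s) + K) + v * ((\<Sum>s\<in>UNIV. M2$k$s * e s) + K)"
        unfolding sd unfolding vu by (simp add: algebra_simps)
      also have "\<dots> \<le> E0$k" using L E1 E2 by blast
      finally show ?thesis unfolding r K_def by (simp only: add.assoc)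
    qed
    have c3: "(\<Sum>s\<in>UNIV. u * M1$k$s + v * M2$k$s) \<ge> (u * g1$k + v * g2$k) * M" for k
    proof -
      have "g1$k * M \<le> (\<Sum>s\<in>UNIV. M1$k$s)" using X by blast
      hence "u * (g1$k * M) \<le> u * (\<Sum>s\<in>UNIV. M1$k$s)" using u by (intro mult_left_mono) auto
      moreover have "g2$k * M \<le> (\<Sum>s\<in>UNIV. M2$k$s)" using Y by blast
      hence "v * (g2$k * M) \<le> v * (\<Sum>s\<in>UNIV. M2$k$s)" using v by (intro mult_left_mono) auto
      ultimately show ?thesis by (simp add: sum.distrib sum_distrib_left algebra_simps)
    qed
    have c4: "0 \<le> u * g1$k + v * g2$k \<and> u * g1$k + v * g2$k < 1" for k
    proof -
      have "0 \<le> g1$k \<and> g1$k < 1" using X by blast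
      moreover have "0 \<le> g2$k \<and> g2$k < 1" using Y by blast
      ultimately show ?thesis using u v LT by auto
    qed
    have c5: "u * T1$k + v * T2$k \<ge> (u * M1$k$s + v * M2$k$s) * Q / Rdl$k$s" for k s
    proof -
      have "M1$k$s * Q / Rdl$k$s \<le> T1$k" using X by blast
      hence "u * (M1$k$s * Q / Rdl$k$s) \<le> u * T1$k" using u by (intro mult_left_mono) auto
      moreover have "M2$k$s * Q / Rdl$k$s \<le> T2$k" using Y by blast
      hence "v * (M2$k$s * Q / Rdl$k$s) \<le> v * T2$k" using v by (intro mult_left_mono) auto
      ultimately show ?thesis by (simp add: algebra_simps add_divide_distrib)
    qed
    have c6: "u * U1$k + v * U2$k \<ge> (u * M1$k$s + v * M2$k$s) * Q / Rul$k$s" for k s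
    proof -
      have "M1$k$s * Q / Rul$k$s \<le> U1$k" using X by blast
      hence "u * (M1$k$s * Q / Rul$k$s) \<le> u * U1$k" using u by (intro mult_left_mono) auto
      moreover have "M2$k$s * Q / Rul$k$s \<le> U2$k" using Y by blast
      hence "v * (M2$k$s * Q / Rul$k$s) \<le> v * U2$k" using v by (intro mult_left_mono) auto
      ultimately show ?thesis by (simp add: algebra_simps add_divide_distrib)
    qed
    have c7: "(u * g1$k + v * g2$k)^2 < a$k" for k
    proof -
      have "(g1$k)^2 < a$k" "(g2$k)^2 < a$k" using X Y by blast+
      have "(u * g1$k + v * g2$k)^2 \<le> u * (g1$k)^2 + v * (g2$k)^2" using sq_conv u v uv by blast
      also have "\<dots> < a$k" using LT \<open>(g1$k)^2 < a$k\<close> \<open>(g2$k)^2 < a$k\<close> by blast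
      finally show ?thesis .
    qed
    show "u *\<^sub>R x + v *\<^sub>R y \<in> Dom"
      unfolding x_eq y_eq Dom_def feasible_set_def objective_domain_def
      using c1 c2 c3 c4 c5 c6 c7 by simp
  qed
  have cf: "convex_on Dom (\<lambda>(g, Mt, Tul, Tdl). objective I eta V Dk a g)"
    unfolding convex_on_def
  proof (intro conjI cD ballI allI impI)
    fix x y :: "(real^'k) \<times> (real^'s^'k) \<times> (real^'k) \<times> (real^'k)" and u v :: real
    assume x: "x \<in> Dom" and y: "y \<in> Dom" and u: "0 \<le> u" and v: "0 \<le> v" and uv: "u + v = 1"
    obtain g1 M1 U1 T1 where x_eq: "x = (g1, M1, U1, T1)" by (cases x) auto
    obtain g2 M2 U2 T2 where y_eq: "y = (g2, M2, U2, T2)" by (cases y) auto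
    have vu: "v = 1 - u" using uv by simp
    have X: "\<forall>k. (g1$k)^2 < a$k" using x unfolding x_eq Dom_def objective_domain_def by simp
    have Y: "\<forall>k. (g2$k)^2 < a$k" using y unfolding y_eq Dom_def objective_domain_def by simp
    define SD where "SD = (\<Sum>j\<in>UNIV. Dk$j)"
    define LL where "LL g = (\<Sum>k\<in>UNIV. Dk$k / SD * (1 - g$k))" for g :: "real^'k"
    define SQ where "SQ g = sqrt (\<Sum>k\<in>UNIV. 1 / (- ((g$k)^2) + a$k))" for g :: "real^'k"
    define c where "c = V * eta / sqrt SD"
    have obj: "objective I eta V Dk a g = I / eta * LL g + c * SQ g" for g
      by (simp add: objective_def LL_def SQ_def c_def SD_def)
    have c0: "c \<ge> 0" using assms(2,3,5) unfolding c_def SD_def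
      by (simp add: sum_nonneg less_imp_le)
    have i0: "I / eta \<ge> 0" using assms(1,2) by simp
    have LLe: "LL (u *\<^sub>R g1 + v *\<^sub>R g2) = u * LL g1 + v * LL g2"
    proof -
      have w: "w * (1 - (u * p + v * q)) = u * (w * (1 - p)) + v * (w * (1 - q))" for w p q :: real
        unfolding vu by (simp add: algebra_simps)
      have "Dk$k / SD * (1 - (u * g1$k + v * g2$k)) = u * (Dk$k / SD * (1 - g1$k)) + v * (Dk$k / SD * (1 - g2$k))" for k
        by (rule w)
      thus ?thesis by (simp add: LL_def sum.distrib sum_distrib_left)
    qed
    have SQe: "SQ (u *\<^sub>R g1 + v *\<^sub>R g2) \<le> u * SQ g1 + v * SQ g2"
      unfolding SQ_def using sqrt_part[OF X Y u v uv] .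
    have "I / eta * LL (u *\<^sub>R g1 + v *\<^sub>R g2) + c * SQ (u *\<^sub>R g1 + v *\<^sub>R g2)
        \<le> I / eta * (u * LL g1 + v * LL g2) + c * (u * SQ g1 + v * SQ g2)"
      using LLe SQe c0 by (simp add: mult_left_mono)
    also have "\<dots> = u * (I / eta * LL g1 + c * SQ g1) + v * (I / eta * LL g2 + c * SQ g2)"
      by (simp add: algebra_simps)
    finally show "(\<lambda>(g, Mt, Tul, Tdl). objective I eta V Dk a g) (u *\<^sub>R x + v *\<^sub>R y)
       \<le> u * (\<lambda>(g, Mt, Tul, Tdl). objective I eta V Dk a g) x + v * (\<lambda>(g, Mt, Tul, Tdl). objective I eta V Dk a g) y"
      unfolding x_eq y_eq by (simp add: obj)
  qed
  show ?thesis using cD cf by simp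
qed

end
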